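(* Fix $f\in\mathbb{N}$ and $\ell=f+1$. For a family of directed graphs $G=(V,E)$ with $n=|V|\to\infty$, consider the reinforcement $V'=V\times[\ell]$, $P(v_i)=v$, $E'=\{(v',w'):(P(v'),P(w'))\in E\}$, with $A'$ defined from $A$ by: every $v'$ initializes copies of the state variables of $P(v')$, sends on each $(v',w')\in E'$ the message $P(v')$ would send on $(P(v'),P(w'))$ under $A$, and updates its state as if $P(v')$ received from each in-neighbor $w$ the unique message sent to $v'$ by some copy of $w$. Let $F'\subseteq V'$ contain each node independently with probability $p=p(n)$, faulty nodes suffering omission faults. (a) If $p\in o(n^{-1/(f+1)})$, then with probability $1-o(1)$ no $v\in V$ has all its $\ell$ copies in $F'$, and consequently $A'$ strongly simulates $A$ with probability $1-o(1)$, i.e., the reinforcement is a valid strong reinforcement under $\mathrm{Om}(p)$. (b) If $G$ contains $\Omega(n)$ nodes with non-zero outdegree and $p\in\omega(n^{-1/(f+1)})$, then with probability $1-o(1)$ all copies of some node with non-zero outdegree are faulty, and the reinforcement is not valid.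
   Context: Networks are synchronous directed graphs running a scheduling algorithm $A$ (each round: send messages on outgoing links based on state, then update state from received messages and environment input). $\mathrm{Om}(p)$: each node of $V'$ is independently faulty with probability $p$; faulty nodes may omit sending messages they should send but otherwise follow the protocol. Strong simulation under $\mathrm{Om}(p)$: assuming each $v'\in V'$ receives the same environment input as $P(v')$, every $v'\in V'$ computes in each round the state of $P(v')$ in the fault-free execution of $A$. A reinforcement is valid if $A'$ is a (strong) simulation of $A$ with probability $1-o(1)$ as $n\to\infty$ ($f$ fixed). *)

theory Defs
  imports "HOL-Probability.Probability" "HOL-Library.Landau_Symbols"
begin

text \<open>A synchronous algorithm on a directed graph (V,E) with vertices of type 'v:
  initial states, the message a node sends on an outgoing link given its state,
  and the state update from the received messages (None = no message on that link)
  and the environment input of the round.\<close>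
record ('v,'s,'m,'i) algorithm =
  a_init :: "'v \<Rightarrow> 's"
  a_send :: "'v \<Rightarrow> 's \<Rightarrow> 'v \<Rightarrow> 'm"
  a_upd  :: "'v \<Rightarrow> 's \<Rightarrow> ('v \<Rightarrow> 'm option) \<Rightarrow> 'i \<Rightarrow> 's"

fun exec :: "('v,'s,'m,'i) algorithm \<Rightarrow> 'v set \<Rightarrow> ('v \<times> 'v) set \<Rightarrow> (nat \<Rightarrow> 'v \<Rightarrow> 'i)
              \<Rightarrow> nat \<Rightarrow> 'v \<Rightarrow> 's" where
  "exec A V E env 0 v = a_init A v"
| "exec A V E env (Suc r) v =
     a_upd A v (exec A V E env r v)
       (\<lambda>w. if w \<in> V \<and> (w, v) \<in> E then Some (a_send A w (exec A V E env r w) v) else None)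
       (env r v)"

text \<open>Execution of the reinforced algorithm A' on V' = V \<times> [l], P = fst,
  E' = {(v',w'). (P v', P w') \<in> E}.  om r x y means: in round r the message of x
  on link (x,y) is omitted.\<close>
fun exec_reinf :: "('v,'s,'m,'i) algorithm \<Rightarrow> 'v set \<Rightarrow> ('v \<times> 'v) set \<Rightarrow> nat
     \<Rightarrow> (nat \<Rightarrow> 'v \<Rightarrow> 'i) \<Rightarrow> (nat \<Rightarrow> ('v \<times> nat) \<Rightarrow> ('v \<times> nat) \<Rightarrow> bool)
     \<Rightarrow> nat \<Rightarrow> ('v \<times> nat) \<Rightarrow> 's" where
  "exec_reinf A V E l env om 0 x = a_init A (fst x)"
| "exec_reinf A V E l env om (Suc r) x =
     a_upd A (fst x) (exec_reinf A V E l env om r x)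
       (\<lambda>w. if w \<in> V \<and> (w, fst x) \<in> E \<and> (\<exists>j<l. \<not> om r (w, j) x)
            then Some (a_send A w
                   (exec_reinf A V E l env om r (w, SOME j. j < l \<and> \<not> om r (w, j) x)) (fst x))
            else None)
       (env (r) (fst x))"

definition strong_sim :: "('v,'s,'m,'i) algorithm \<Rightarrow> 'v set \<Rightarrow> ('v \<times> 'v) set \<Rightarrow> nat
     \<Rightarrow> ('v \<times> nat) set \<Rightarrow> bool" where
  "strong_sim A V E l F \<longleftrightarrow>
     (\<forall>env om. (\<forall>r x y. om r x y \<longrightarrow> x \<in> F) \<longrightarrow>
        (\<forall>r. \<forall>x \<in> V \<times> {..<l}. exec_reinf A V E l env om r x = exec A V E env r (fst x)))"

definition faults :: "'v set \<Rightarrow> nat \<Rightarrow> real \<Rightarrow> ('v \<times> nat) set pmf" where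
  "faults V l p = map_pmf (\<lambda>b. {x. b x}) (Pi_pmf (V \<times> {..<l}) False (\<lambda>_. bernoulli_pmf p))"

definition valid_reinforcement :: "(nat \<Rightarrow> 'v set) \<Rightarrow> (nat \<Rightarrow> ('v \<times> 'v) set) \<Rightarrow> nat
     \<Rightarrow> (nat \<Rightarrow> real) \<Rightarrow> bool" where
  "valid_reinforcement V E f p \<longleftrightarrow>
     (\<forall>A :: nat \<Rightarrow> ('v, nat, nat, nat) algorithm.
        (\<lambda>n. measure_pmf.prob (faults (V n) (f+1) (p n)) {F. strong_sim (A n) (V n) (E n) (f+1) F})
          \<longlonglongrightarrow> 1)"

end

theory Submission
  imports Defs
begin

lemma faults_reshape:
  assumes "finite A" "finite B"
  shows "map_pmf curry (Pi_pmf (A \<times> B) False (\<lambda>_. q)) =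
         Pi_pmf A (\<lambda>_. False) (\<lambda>_. Pi_pmf B False (\<lambda>_. q))"
proof (rule pmf_eqI)
  fix h :: "'a \<Rightarrow> 'b \<Rightarrow> bool"
  have inj: "inj (curry :: ('a \<times> 'b \<Rightarrow> bool) \<Rightarrow> _)"
    by (intro injI) (metis case_prod_curry)
  have "pmf (map_pmf curry (Pi_pmf (A \<times> B) False (\<lambda>_. q))) h
      = pmf (map_pmf curry (Pi_pmf (A \<times> B) False (\<lambda>_. q))) (curry (case_prod h))" by simp
  also have "\<dots> = pmf (Pi_pmf (A \<times> B) False (\<lambda>_. q)) (case_prod h)"
    by (rule pmf_map_inj'[OF inj])
  also have "\<dots> = pmf (Pi_pmf A (\<lambda>_. False) (\<lambda>_. Pi_pmf B False (\<lambda>_. q))) h"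
  proof (cases "\<forall>v i. (v, i) \<notin> A \<times> B \<longrightarrow> \<not> h v i")
    case True
    then have out: "\<forall>v. v \<notin> A \<longrightarrow> h v = (\<lambda>_. False)" by auto
    have "pmf (Pi_pmf (A \<times> B) False (\<lambda>_. q)) (case_prod h) = (\<Prod>x\<in>A\<times>B. pmf q (case_prod h x))"
      using True assms by (subst pmf_Pi) auto
    also have "\<dots> = (\<Prod>v\<in>A. \<Prod>i\<in>B. pmf q (h v i))"
      by (simp add: prod.cartesian_product case_prod_beta')
    also have "\<dots> = (\<Prod>v\<in>A. pmf (Pi_pmf B False (\<lambda>_. q)) (h v))"
      using True assms by (intro prod.cong refl) (subst pmf_Pi, auto)
    also have "\<dots> = pmf (Pi_pmf A (\<lambda>_. False) (\<lambda>_. Pi_pmf B False (\<lambda>_. q))) h"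
      using out assms by (subst pmf_Pi) auto
    finally show ?thesis .
  next
    case False
    then obtain v i where vi: "(v, i) \<notin> A \<times> B" "h v i" by auto
    have l: "pmf (Pi_pmf (A \<times> B) False (\<lambda>_. q)) (case_prod h) = 0"
      using vi assms by (subst pmf_Pi) auto
    show ?thesis
    proof (cases "v \<in> A")
      case False
      then have "\<not> (\<forall>v. v \<notin> A \<longrightarrow> h v = (\<lambda>_. False))" using vi by (metis (full_types))
      then show ?thesis using l assms by (subst pmf_Pi) auto
    next
      case True
      then have "i \<notin> B" using vi by auto
      then have z: "pmf (Pi_pmf B False (\<lambda>_. q)) (h v) = 0"
        using vi assms by (subst pmf_Pi) auto
      have "(\<Prod>v\<in>A. pmf (Pi_pmf B False (\<lambda>_. q)) (h v)) = 0"
        using z True assms by (metis prod_zero_iff)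
      then show ?thesis using l assms by (subst pmf_Pi) auto
    qed
  qed
  finally show "pmf (map_pmf curry (Pi_pmf (A \<times> B) False (\<lambda>_. q))) h =
         pmf (Pi_pmf A (\<lambda>_. False) (\<lambda>_. Pi_pmf B False (\<lambda>_. q))) h" .
qed

lemma prob_all_true:
  assumes "0 \<le> p" "p \<le> 1"
  shows "measure_pmf.prob (Pi_pmf {..<l} False (\<lambda>_. bernoulli_pmf p)) {h. \<not> (\<forall>i<l. h i)} = 1 - p ^ l"
proof -
  let ?Q = "Pi_pmf {..<l} False (\<lambda>_. bernoulli_pmf p)"
  have "measure_pmf.prob ?Q (Pi {..<l} (\<lambda>_. {True})) = (\<Prod>i<l. measure_pmf.prob (bernoulli_pmf p) {True})"
    by (rule measure_Pi_pmf_Pi) simp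
  also have "\<dots> = p ^ l" using assms by (simp add: measure_pmf_single)
  finally have a: "measure_pmf.prob ?Q (Pi {..<l} (\<lambda>_. {True})) = p ^ l" .
  have "{h. \<not> (\<forall>i<l. h i)} = space (measure_pmf ?Q) - Pi {..<l} (\<lambda>_. {True})" by auto
  moreover have "measure_pmf.prob ?Q (space (measure_pmf ?Q) - Pi {..<l} (\<lambda>_. {True})) = 1 - p ^ l"
    using a by (subst measure_pmf.prob_compl) auto
  ultimately show ?thesis by simp
qed

lemma prob_none_all:
  assumes fin: "finite V" and S: "S \<subseteq> V" and p: "0 \<le> p" "p \<le> 1"
  shows "measure_pmf.prob (faults V l p) {F. \<forall>v\<in>S. \<not> (\<forall>i<l. (v, i) \<in> F)} = (1 - p ^ l) ^ card S"
proof -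
  let ?M = "Pi_pmf (V \<times> {..<l}) False (\<lambda>_. bernoulli_pmf p)"
  let ?Q = "Pi_pmf {..<l} False (\<lambda>_. bernoulli_pmf p)"
  let ?B = "\<lambda>v. if v \<in> S then {h. \<not> (\<forall>i<l. h i)} else UNIV"
  have "measure_pmf.prob (faults V l p) {F. \<forall>v\<in>S. \<not> (\<forall>i<l. (v, i) \<in> F)}
      = measure_pmf.prob ?M (curry -` Pi V ?B)"
  proof -
    have "{b. \<forall>v\<in>S. \<not> (\<forall>i<l. b (v, i))} = curry -` Pi V ?B"
      using S by (auto simp: Pi_iff curry_def split: if_splits; metis (mono_tags) subsetD)
    then show ?thesis unfolding faults_def by simp
  qed
  also have "\<dots> = measure_pmf.prob (map_pmf curry ?M) (Pi V ?B)" by simp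
  also have "\<dots> = measure_pmf.prob (Pi_pmf V (\<lambda>_. False) (\<lambda>_. ?Q)) (Pi V ?B)"
    by (subst faults_reshape) (use fin in auto)
  also have "\<dots> = (\<Prod>v\<in>V. measure_pmf.prob ?Q (?B v))"
    by (rule measure_Pi_pmf_Pi) (rule fin)
  also have "\<dots> = (\<Prod>v\<in>V. if v \<in> S then 1 - p ^ l else 1)"
    using p prob_all_true[of p l] by (intro prod.cong refl) simp
  also have "\<dots> = (1 - p ^ l) ^ card S"
    using S fin by (simp add: prod.If_cases Int_absorb1)
  finally show ?thesis .
qed

lemma sim_good:
  fixes A :: "('v,'s,'m,'i) algorithm"
  assumes good: "\<forall>v\<in>V. \<exists>i<l. (v, i) \<notin> F"
  shows "strong_sim A V E l F"
  unfolding strong_sim_def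
proof (rule allI, rule allI, rule impI)
  fix env :: "nat \<Rightarrow> 'v \<Rightarrow> 'i" and om :: "nat \<Rightarrow> 'v \<times> nat \<Rightarrow> 'v \<times> nat \<Rightarrow> bool"
  assume om: "\<forall>r x y. om r x y \<longrightarrow> x \<in> F"
  have "\<forall>x\<in>V \<times> {..<l}. exec_reinf A V E l env om r x = exec A V E env r (fst x)" for r
  proof (induction r)
    case 0 show ?case by simp
  next
    case (Suc r)
    show ?case
    proof
      fix x assume x: "x \<in> V \<times> {..<l}"
      have ex: "\<exists>j<l. \<not> om r (w, j) x" if wV: "w \<in> V" for w
      proof -
        obtain j where "j < l" "(w, j) \<notin> F" using good wV by auto
        then show ?thesis using om by blast
      qed
      have eq: "exec_reinf A V E l env om r (w, SOME j. j < l \<and> \<not> om r (w, j) x) = exec A V E env r w"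
        if "w \<in> V" for w
      proof -
        have "(SOME j. j < l \<and> \<not> om r (w, j) x) < l"
          using someI_ex[OF ex[OF that]] by blast
        then show ?thesis using Suc.IH that by auto
      qed
      show "exec_reinf A V E l env om (Suc r) x = exec A V E env (Suc r) (fst x)"
      proof -
        have m: "(\<lambda>w. if w \<in> V \<and> (w, fst x) \<in> E \<and> (\<exists>j<l. \<not> om r (w, j) x)
              then Some (a_send A w (exec_reinf A V E l env om r (w, SOME j. j < l \<and> \<not> om r (w, j) x)) (fst x))
              else None) = (\<lambda>w. if w \<in> V \<and> (w, fst x) \<in> E
              then Some (a_send A w (exec A V E env r w) (fst x)) else None)"
          using ex eq by (intro ext) auto
        have s: "exec_reinf A V E l env om r x = exec A V E env r (fst x)" using Suc.IH x by blast
        show ?thesis by (simp only: exec_reinf.simps exec.simps m s)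
      qed
    qed
  qed
  then show "\<forall>r. \<forall>x\<in>V \<times> {..<l}. exec_reinf A V E l env om r x = exec A V E env r (fst x)" by blast
qed

definition badA :: "'v set \<Rightarrow> ('v \<times> 'v) set \<Rightarrow> ('v, nat, nat, nat) algorithm" where
  "badA V E = \<lparr>a_init = (\<lambda>_. 0), a_send = (\<lambda>_ _ _. 0),
     a_upd = (\<lambda>v s msgs i. if msgs = (\<lambda>w. if w \<in> V \<and> (w, v) \<in> E then Some 0 else None) then 0 else 1)\<rparr>"

lemma badA_simps [simp]:
  "a_init (badA V E) = (\<lambda>_. 0)" "a_send (badA V E) = (\<lambda>_ _ _. 0)"
  "a_upd (badA V E) = (\<lambda>v s msgs i. if msgs = (\<lambda>w. if w \<in> V \<and> (w, v) \<in> E then Some 0 else None) then 0 else 1)"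
  by (simp_all add: badA_def)

lemma badA_simps2 [simp]:
  "a_send (badA V E) v s w = 0"
  "a_upd (badA V E) v s msgs i = (if msgs = (\<lambda>w. if w \<in> V \<and> (w, v) \<in> E then Some 0 else None) then 0 else 1)"
  by (simp_all add: badA_def)

lemma bad:
  assumes EV: "E \<subseteq> V \<times> V" and l: "0 < l" and vw: "(v, w) \<in> E" and allF: "\<forall>i<l. (v, i) \<in> F"
  shows "\<not> strong_sim (badA V E) V E l F"
proof
  assume ss: "strong_sim (badA V E) V E l F"
  have om: "\<forall>r x y. (\<lambda>r x y. x \<in> F) r x y \<longrightarrow> x \<in> F" by simp
  have w: "(w, 0) \<in> V \<times> {..<l}" "v \<in> V" using EV vw l by auto
  have "exec_reinf (badA V E) V E l (\<lambda>_ _. 0) (\<lambda>r x y. x \<in> F) (Suc 0) (w, 0)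
        = exec (badA V E) V E (\<lambda>_ _. 0) (Suc 0) w"
    using ss om w unfolding strong_sim_def by (metis fst_conv)
  moreover have "exec (badA V E) V E (\<lambda>_ _. 0) (Suc 0) w = 0"
    by (simp only: exec.simps badA_simps) simp
  moreover have "exec_reinf (badA V E) V E l (\<lambda>_ _. 0) (\<lambda>r x y. x \<in> F) (Suc 0) (w, 0) = 1"
  proof -
    have "(\<lambda>w'. if w' \<in> V \<and> (w', w) \<in> E \<and> (\<exists>j<l. (w', j) \<notin> F)
            then Some (0::nat) else None) v = None" using allF by auto
    moreover have "(\<lambda>w'. if w' \<in> V \<and> (w', w) \<in> E then Some (0::nat) else None) v = Some 0"
      using w vw by auto
    ultimately have "(\<lambda>w'. if w' \<in> V \<and> (w', w) \<in> E \<and> (\<exists>j<l. (w', j) \<notin> F)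
            then Some (0::nat) else None) \<noteq> (\<lambda>w'. if w' \<in> V \<and> (w', w) \<in> E then Some (0::nat) else None)"
      by (metis option.distinct(1))
    then show ?thesis by (simp cong: if_cong)
  qed
  ultimately show False by simp
qed

lemma key_id:
  fixes n :: nat and l :: nat and q :: real
  assumes "0 < n" "0 < l"
  shows "(q / real n powr (- 1 / real l)) ^ l = real n * q ^ l"
proof -
  have "(real n powr (- 1 / real l)) ^ l = real n powr (- 1 / real l * real l)"
    using assms by (simp add: powr_realpow[symmetric] powr_powr)
  also have "\<dots> = inverse (real n)" using assms by (simp add: powr_minus)
  finally show ?thesis using assms by (simp add: power_divide field_simps)
qed

lemma bern_aux: "0 \<le> (q::real) \<Longrightarrow> q \<le> 1 \<Longrightarrow> 1 - real n * q \<le> (1 - q) ^ n"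
  using Bernoulli_inequality[of "-q" n] by simp

lemma le1_aux: "0 \<le> (q::real) \<Longrightarrow> q \<le> 1 \<Longrightarrow> (1 - q) ^ n \<le> 1"
  by (intro power_le_one) auto

lemma ge0_aux: "0 \<le> (q::real) \<Longrightarrow> q \<le> 1 \<Longrightarrow> 0 \<le> (1 - q) ^ n"
  by simp

lemma q_aux: "0 \<le> (x::real) \<Longrightarrow> x \<le> 1 \<Longrightarrow> 0 \<le> x ^ k \<and> x ^ k \<le> 1"
  by (simp add: power_le_one)

lemma exp_aux: "0 \<le> (q::real) \<Longrightarrow> q \<le> 1 \<Longrightarrow> c * real n \<le> real m \<Longrightarrow>
   (1 - q) ^ m \<le> exp (- (c * (real n * q)))"
proof -
  assume q: "0 \<le> q" "q \<le> 1" and m: "c * real n \<le> real m"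
  have "(1 - q) ^ m \<le> exp (- q) ^ m"
    using q exp_ge_add_one_self[of "- q"] by (intro power_mono) auto
  also have "\<dots> = exp (- (real m * q))"
    by (simp add: exp_of_nat_mult[symmetric])
  also have "\<dots> \<le> exp (- (c * (real n * q)))"
    using m q mult_right_mono[OF m q(1)] by (simp add: mult.assoc)
  finally show ?thesis .
qed

lemma part_a_lim:
  fixes p :: "nat \<Rightarrow> real"
  assumes o: "p \<in> o(\<lambda>n. real n powr (- 1 / real (f + 1)))" and p01: "\<And>n. 0 \<le> p n \<and> p n \<le> 1"
  shows "(\<lambda>n. (1 - p n ^ (f+1)) ^ n) \<longlonglongrightarrow> 1"
proof -
  have "(\<lambda>n. p n / real n powr (- 1 / real (f + 1))) \<longlonglongrightarrow> 0" by (rule smalloD_tendsto[OF o])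
  then have "(\<lambda>n. (p n / real n powr (- 1 / real (f + 1))) ^ (f+1)) \<longlonglongrightarrow> 0"
  proof -
    have z: "(0::real) ^ (f+1) = 0" by simp
    show ?thesis using tendsto_power[OF \<open>_ \<longlonglongrightarrow> 0\<close>, of "f+1"] unfolding z .
  qed
  then have t: "(\<lambda>n. real n * p n ^ (f+1)) \<longlonglongrightarrow> 0"
  proof (rule Lim_transform_eventually)
    show "\<forall>\<^sub>F n in sequentially. (p n / real n powr (- 1 / real (f + 1))) ^ (f + 1) = real n * p n ^ (f + 1)"
      using eventually_gt_at_top[of "0::nat"] by eventually_elim (rule key_id, auto)
  qed
  have lo: "1 - real n * p n ^ (f+1) \<le> (1 - p n ^ (f+1)) ^ n" for n
    using q_aux[of "p n" "f+1"] p01[of n] bern_aux[of "p n ^ (f+1)" n] by blast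
  have hi: "(1 - p n ^ (f+1)) ^ n \<le> 1" for n
    using q_aux[of "p n" "f+1"] p01[of n] le1_aux[of "p n ^ (f+1)" n] by blast
  have "(\<lambda>n. 1 - real n * p n ^ (f+1)) \<longlonglongrightarrow> 1 - 0" by (intro tendsto_diff tendsto_const t)
  then have t1: "(\<lambda>n. 1 - real n * p n ^ (f+1)) \<longlonglongrightarrow> 1" by simp
  have e1: "\<forall>\<^sub>F n in sequentially. 1 - real n * p n ^ (f+1) \<le> (1 - p n ^ (f+1)) ^ n"
    using lo by (intro always_eventually) blast
  have e2: "\<forall>\<^sub>F n in sequentially. (1 - p n ^ (f+1)) ^ n \<le> 1"
    using hi by (intro always_eventually) blast
  show ?thesis by (rule tendsto_sandwich[OF e1 e2 t1 tendsto_const])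
qed

lemma part_b_lim:
  fixes p :: "nat \<Rightarrow> real" and m :: "nat \<Rightarrow> nat"
  assumes om: "p \<in> \<omega>(\<lambda>n. real n powr (- 1 / real (f + 1)))" and p01: "\<And>n. 0 \<le> p n \<and> p n \<le> 1"
    and Om: "(\<lambda>n. real (m n)) \<in> \<Omega>(\<lambda>n. real n)"
  shows "(\<lambda>n. (1 - p n ^ (f+1)) ^ m n) \<longlonglongrightarrow> 0"
proof -
  obtain c where c: "c > 0" "\<forall>\<^sub>F n in sequentially. norm (real (m n)) \<ge> c * norm (real n)"
    using landau_omega.bigE[OF Om] by blast
  have "LIM n sequentially. norm (p n / real n powr (- 1 / real (f + 1))) :> at_top"
    by (rule smallomegaD_filterlim_at_top_norm[OF om])
       (use eventually_gt_at_top[of "0::nat"] in eventually_elim, auto)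
  then have "LIM n sequentially. (norm (p n / real n powr (- 1 / real (f + 1)))) ^ (f+1) :> at_top"
    by (intro filterlim_pow_at_top) auto
  then have "LIM n sequentially. real n * p n ^ (f+1) :> at_top"
  proof (rule filterlim_cong[THEN iffD1, rotated 3])
    show "\<forall>\<^sub>F n in sequentially. (norm (p n / real n powr (- 1 / real (f + 1)))) ^ (f+1) = real n * p n ^ (f + 1)"
      using eventually_gt_at_top[of "0::nat"]
    proof eventually_elim
      case (elim n)
      have "(norm (p n / real n powr (- 1 / real (f + 1)))) ^ (f+1) = (p n / real n powr (- 1 / real (f + 1))) ^ (f+1)"
        using p01[of n] by (simp add: abs_of_nonneg)
      then show ?case using key_id[of n "f+1" "p n"] elim by simp
    qed
  qed auto
  then have "LIM n sequentially. c * (real n * p n ^ (f+1)) :> at_top"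
    using c(1) by (intro filterlim_tendsto_pos_mult_at_top[OF tendsto_const]) auto
  then have "LIM n sequentially. - (c * (real n * p n ^ (f+1))) :> at_bot"
    by (simp add: filterlim_uminus_at_bot)
  then have e: "(\<lambda>n. exp (- (c * (real n * p n ^ (f+1))))) \<longlonglongrightarrow> 0"
    by (rule filterlim_compose[OF exp_at_bot])
  have up: "\<forall>\<^sub>F n in sequentially. (1 - p n ^ (f+1)) ^ m n \<le> exp (- (c * (real n * p n ^ (f+1))))"
    using c(2)
  proof eventually_elim
    case (elim n)
    then have "c * real n \<le> real (m n)" by simp
    then show ?case using q_aux[of "p n" "f+1"] p01[of n] exp_aux[of "p n ^ (f+1)" c n "m n"] by blast
  qed
  have lo: "\<forall>\<^sub>F n in sequentially. 0 \<le> (1 - p n ^ (f+1)) ^ m n"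
    using q_aux[of "p _" "f+1"] p01 ge0_aux by (intro always_eventually allI) blast
  show ?thesis by (rule tendsto_sandwich[OF lo up tendsto_const e])
qed

lemma valid_badA: "valid_reinforcement V E f p \<Longrightarrow> (\<lambda>n. measure_pmf.prob (faults (V n) (f+1) (p n))
                 {F. strong_sim (badA (V n) (E n)) (V n) (E n) (f+1) F}) \<longlonglongrightarrow> 1"
  unfolding valid_reinforcement_def
  apply (erule allE[where x="\<lambda>n. badA (V n) (E n)"])
  apply assumption
  done

theorem theorem4:
  fixes V :: "nat \<Rightarrow> 'v set" and E :: "nat \<Rightarrow> ('v \<times> 'v) set"
    and f :: nat and p :: "nat \<Rightarrow> real"
  assumes finV: "\<And>n. finite (V n)"
    and cardV: "\<And>n. card (V n) = n"
    and EV: "\<And>n. E n \<subseteq> V n \<times> V n"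
    and p01: "\<And>n. 0 \<le> p n \<and> p n \<le> 1"
  shows
    "(p \<in> o(\<lambda>n. real n powr (- 1 / real (f + 1))) \<longrightarrow>
       (\<lambda>n. measure_pmf.prob (faults (V n) (f+1) (p n))
              {F. \<forall>v \<in> V n. \<not> (\<forall>i < f+1. (v, i) \<in> F)}) \<longlonglongrightarrow> 1
     \<and> (\<forall>A :: nat \<Rightarrow> ('v, 's, 'm, 'i) algorithm.
          (\<lambda>n. measure_pmf.prob (faults (V n) (f+1) (p n))
                 {F. strong_sim (A n) (V n) (E n) (f+1) F}) \<longlonglongrightarrow> 1))
   \<and> ((\<lambda>n. real (card {v \<in> V n. \<exists>w. (v, w) \<in> E n})) \<in> \<Omega>(\<lambda>n. real n)
       \<and> p \<in> \<omega>(\<lambda>n. real n powr (- 1 / real (f + 1))) \<longrightarrow>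
       (\<lambda>n. measure_pmf.prob (faults (V n) (f+1) (p n))
              {F. \<exists>v \<in> V n. (\<exists>w. (v, w) \<in> E n) \<and> (\<forall>i < f+1. (v, i) \<in> F)}) \<longlonglongrightarrow> 1
     \<and> \<not> valid_reinforcement V E f p)"
proof -
  define S where "S n = {v \<in> V n. \<exists>w. (v, w) \<in> E n}" for n
  define GA where "GA n = {F. \<forall>v \<in> V n. \<not> (\<forall>i < f+1. (v, i) \<in> F)}" for n
  define GB where "GB n = {F. \<forall>v \<in> S n. \<not> (\<forall>i < f+1. (v, i) \<in> F)}" for n
  define BB where "BB n = {F. \<exists>v \<in> V n. (\<exists>w. (v, w) \<in> E n) \<and> (\<forall>i < f+1. (v, i) \<in> F)}" for n
  have SV: "S n \<subseteq> V n" for n by (auto simp: S_def)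
  have evA: "measure_pmf.prob (faults (V n) (f+1) (p n)) (GA n) = (1 - p n ^ (f+1)) ^ n" for n
    unfolding GA_def using prob_none_all[OF finV[of n] order_refl, of "p n" "f+1"] p01[of n] cardV[of n] by simp
  have evGB: "measure_pmf.prob (faults (V n) (f+1) (p n)) (GB n) = (1 - p n ^ (f+1)) ^ card (S n)" for n
    unfolding GB_def by (rule prob_none_all[OF finV[of n] SV[of n]]) (use p01[of n] in auto)
  have BBc: "BB n = space (measure_pmf (faults (V n) (f+1) (p n))) - GB n" for n
    by (auto simp: BB_def GB_def S_def)
  have evB: "measure_pmf.prob (faults (V n) (f+1) (p n)) (BB n) = 1 - (1 - p n ^ (f+1)) ^ card (S n)" for n
    unfolding BBc by (subst measure_pmf.prob_compl, simp) (subst evGB, rule refl)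
  have partA: "(\<lambda>n. measure_pmf.prob (faults (V n) (f+1) (p n)) (GA n)) \<longlonglongrightarrow> 1
     \<and> (\<forall>A :: nat \<Rightarrow> ('v, 's, 'm, 'i) algorithm.
          (\<lambda>n. measure_pmf.prob (faults (V n) (f+1) (p n))
                 {F. strong_sim (A n) (V n) (E n) (f+1) F}) \<longlonglongrightarrow> 1)"
    if o: "p \<in> o(\<lambda>n. real n powr (- 1 / real (f + 1)))"
  proof
    show tA: "(\<lambda>n. measure_pmf.prob (faults (V n) (f+1) (p n)) (GA n)) \<longlonglongrightarrow> 1"
      unfolding evA by (rule part_a_lim[OF o p01])
    show "\<forall>A :: nat \<Rightarrow> ('v, 's, 'm, 'i) algorithm.
          (\<lambda>n. measure_pmf.prob (faults (V n) (f+1) (p n))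
                 {F. strong_sim (A n) (V n) (E n) (f+1) F}) \<longlonglongrightarrow> 1"
    proof
      fix A :: "nat \<Rightarrow> ('v, 's, 'm, 'i) algorithm"
      have e1: "\<forall>\<^sub>F n in sequentially. measure_pmf.prob (faults (V n) (f+1) (p n)) (GA n)
          \<le> measure_pmf.prob (faults (V n) (f+1) (p n)) {F. strong_sim (A n) (V n) (E n) (f+1) F}"
      proof (intro always_eventually allI measure_pmf.finite_measure_mono)
        fix n show "GA n \<subseteq> {F. strong_sim (A n) (V n) (E n) (f+1) F}"
          unfolding GA_def by (auto intro!: sim_good)
      qed simp
      have e2: "\<forall>\<^sub>F n in sequentially.
          measure_pmf.prob (faults (V n) (f+1) (p n)) {F. strong_sim (A n) (V n) (E n) (f+1) F} \<le> 1"
        by (intro always_eventually allI measure_pmf.prob_le_1)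
      show "(\<lambda>n. measure_pmf.prob (faults (V n) (f+1) (p n))
                 {F. strong_sim (A n) (V n) (E n) (f+1) F}) \<longlonglongrightarrow> 1"
        by (rule tendsto_sandwich[OF e1 e2 tA tendsto_const])
    qed
  qed
  have partB: "(\<lambda>n. measure_pmf.prob (faults (V n) (f+1) (p n)) (BB n)) \<longlonglongrightarrow> 1
     \<and> \<not> valid_reinforcement V E f p"
    if Om: "(\<lambda>n. real (card (S n))) \<in> \<Omega>(\<lambda>n. real n)"
      and om: "p \<in> \<omega>(\<lambda>n. real n powr (- 1 / real (f + 1)))"
  proof
    have t0: "(\<lambda>n. (1 - p n ^ (f+1)) ^ card (S n)) \<longlonglongrightarrow> 0"
      by (rule part_b_lim[OF om p01 Om])
    have "(\<lambda>n. 1 - (1 - p n ^ (f+1)) ^ card (S n)) \<longlonglongrightarrow> 1 - 0"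
      by (intro tendsto_diff tendsto_const t0)
    then show "(\<lambda>n. measure_pmf.prob (faults (V n) (f+1) (p n)) (BB n)) \<longlonglongrightarrow> 1"
      unfolding evB by simp
    show "\<not> valid_reinforcement V E f p"
    proof
      assume "valid_reinforcement V E f p"
      then have t1: "(\<lambda>n. measure_pmf.prob (faults (V n) (f+1) (p n))
                 {F. strong_sim (badA (V n) (E n)) (V n) (E n) (f+1) F}) \<longlonglongrightarrow> 1"
        by (rule valid_badA)
      have le: "measure_pmf.prob (faults (V n) (f+1) (p n))
                 {F. strong_sim (badA (V n) (E n)) (V n) (E n) (f+1) F} \<le> (1 - p n ^ (f+1)) ^ card (S n)" for n
      proof -
        have "{F. strong_sim (badA (V n) (E n)) (V n) (E n) (f+1) F} \<subseteq> GB n"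
        proof
          fix F assume ss: "F \<in> {F. strong_sim (badA (V n) (E n)) (V n) (E n) (f+1) F}"
          show "F \<in> GB n" unfolding GB_def S_def
          proof (clarify)
            fix v w assume "v \<in> V n" "(v, w) \<in> E n" "\<forall>i<f+1. (v, i) \<in> F"
            then show False using bad[OF EV[of n], of "f+1" v w F] ss by auto
          qed
        qed
        then have "measure_pmf.prob (faults (V n) (f+1) (p n))
                 {F. strong_sim (badA (V n) (E n)) (V n) (E n) (f+1) F}
              \<le> measure_pmf.prob (faults (V n) (f+1) (p n)) (GB n)"
          by (intro measure_pmf.finite_measure_mono) simp_all
        then show ?thesis using evGB by simp
      qed
      have "1 \<le> (0::real)"
        by (rule LIMSEQ_le[OF t1 t0]) (use le in blast)
      then show False by simp
    qed
  qed
  show ?thesis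
    using partA partB unfolding GA_def BB_def S_def by blast
qed

end
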